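(* Let $\delta(l)\in\Delta(\mathfrak{t})$, let $\psi=\{k_1(z)\delta(l)\}\psi_0\in\mathcal{M}_{\geqslant0}$ with $k_1\in G_{<0}$ and $\varphi=\{k_2(z)\delta(l)\}\varphi_0\in\mathcal{M}_{<0}$ with $k_2\in G_{\geqslant0}$, and set $U_\alpha:=k_1E_\alpha k_1^{-1}$, $W_\beta:=k_2E_\beta z^{-1}k_2^{-1}$ ($1\le\alpha,\beta\le r$). Suppose that for each $m\ge0$ and $1\le\alpha\le r$ there is $M_{m\alpha}\in\pi_{\geqslant0}(\mathrm{gl}_n(R)[z,z^{-1}))$ (a polynomial in $z$) with $\partial_{m\alpha}(\psi)=M_{m\alpha}\psi$ and $\partial_{m\alpha}(\varphi)=M_{m\alpha}\varphi$, and for each $m<0$ and $1\le\beta\le r$ there is $N_{m\beta}\in\pi_{<0}(\mathrm{gl}_n(R)[z^{-1},z))$ (a polynomial in $z^{-1}$ without constant term) with $\partial_{m\beta}(\psi)=N_{m\beta}\psi$ and $\partial_{m\beta}(\varphi)=N_{m\beta}\varphi$. Then $M_{m\alpha}=\pi_{\geqslant0}(U_\alpha z^m)$, $N_{m\beta}=\pi_{<0}(W_\beta z^{m+1})$, and $(\{U_\alpha\},\{W_\beta\})$ is a solution of the combined $(\mathrm{sl}_n(\mathbb{C}),\mathfrak{t})$-hierarchy (i.e. $(\psi,\varphi)$ is a set of wave matrices of type $\delta(l)$).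
   Context: $R$ is a commutative $\mathbb{C}$-algebra with commuting $\mathbb{C}$-linear derivations $\partial_{m\alpha}$, $m\in\mathbb{Z}$, $1\le\alpha\le r$, acting coefficientwise. $\mathrm{gl}_n(R)[z,z^{-1})$: formal series $\sum_{i=-\infty}^{N}X_iz^i$; $\mathrm{gl}_n(R)[z^{-1},z)$: formal series $\sum_{i=-N}^{\infty}X_iz^i$ ($X_i\in\mathrm{gl}_n(R)$); bracket $[X,Y]=\sum[X_i,Y_j]z^{i+j}$; $\pi_{\geqslant0}$ (resp. $\pi_{<0}$) keeps terms with $i\ge0$ (resp. $i<0$). $\mathfrak{t}\subset\mathrm{sl}_n(\mathbb{C})$ is commutative of maximal dimension $r$, basis $E_1,\dots,E_r$, assumed upper triangular. $G_{<0}=\{\mathrm{Id}+\sum_{i\ge1}Y_iz^{-i}\}$, $G_{\geqslant0}=\{X_0+\sum_{i\ge1}X_iz^i\mid X_0\text{ invertible}\}$ (coefficients in $\mathrm{gl}_n(R)$). For $l\in\mathbb{Z}^n$, $\delta(l)=\mathrm{diag}(z^{l_1},\dots,z^{l_n})$, and $\Delta(\mathfrak{t})=\{\delta(l)\mid [\delta(l),E_\alpha]=0\ \forall\alpha\}$. $\psi_0=\varphi_0$ is a formal symbol (standing for $\exp(\sum_{m\in\mathbb{Z}}\sum_\alpha t_{m\alpha}E_\alpha z^m)$). $\mathcal{M}_{\geqslant0}$ is the set of formal products $\{g\}\psi_0$, $g\in\mathrm{gl}_n(R)[z,z^{-1})$, and $\mathcal{M}_{<0}$ the set of formal products $\{h\}\varphi_0$,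 $h\in\mathrm{gl}_n(R)[z^{-1},z)$ (the factors are kept separate). Left action: $k.\{g\}\psi_0=\{kg\}\psi_0$ for $k\in\mathrm{gl}_n(R)[z,z^{-1})$, and $k.\{h\}\varphi_0=\{kh\}\varphi_0$ for $k\in\mathrm{gl}_n(R)[z^{-1},z)$. Derivations: $\partial_{m\alpha}(\{g\}\psi_0)=\{\partial_{m\alpha}(g)+gE_\alpha z^m\}\psi_0$ and $\partial_{m\alpha}(\{h\}\varphi_0)=\{\partial_{m\alpha}(h)+hE_\alpha z^m\}\varphi_0$. Solution of the combined $(\mathrm{sl}_n(\mathbb{C}),\mathfrak{t})$-hierarchy: for all $m\ge0$ and all $\alpha_1,\alpha_2,\beta$: $\partial_{m\alpha_1}(U_{\alpha_2})=[\pi_{\geqslant0}(U_{\alpha_1}z^m),U_{\alpha_2}]$ and $\partial_{m\alpha_1}(W_\beta)=[\pi_{\geqslant0}(U_{\alpha_1}z^m),W_\beta]$; for all $m<0$ and all $\beta_1,\beta_2,\alpha$: $\partial_{m\beta_1}(W_{\beta_2})=[\pi_{<0}(W_{\beta_1}z^{m+1}),W_{\beta_2}]$ and $\partial_{m\beta_1}(U_\alpha)=[\pi_{<0}(W_{\beta_1}z^{m+1}),U_\alpha]$. *)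

theory Defs
  imports "HOL-Analysis.Analysis"
begin

text \<open>Formal Laurent series in z with coefficients in n x n matrices are represented as
  functions int => matrix (coefficient of z^k).  Series in gl_n(R)[z,z^{-1}) are those with
  support bounded above, series in gl_n(R)[z^{-1},z) those with support bounded below.\<close>

type_synonym ('a, 'n) mser = "int \<Rightarrow> 'a^'n^'n"

definition bdd_up :: "('a::zero, 'n::finite) mser \<Rightarrow> bool" where
  "bdd_up X \<longleftrightarrow> (\<exists>N. \<forall>k>N. X k = 0)"

definition bdd_low :: "('a::zero, 'n::finite) mser \<Rightarrow> bool" where
  "bdd_low X \<longleftrightarrow> (\<exists>N. \<forall>k<N. X k = 0)"

text \<open>Product of series: coefficient k is the sum over i of X_i Y_{k-i}; the index set is
  finite whenever both factors lie in the same ring (both bounded above, or both bounded below),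
  or one factor has finite support.\<close>
definition smul :: "('a::semiring_1, 'n::finite) mser \<Rightarrow> ('a, 'n) mser \<Rightarrow> ('a, 'n) mser" where
  "smul X Y = (\<lambda>k. \<Sum>i\<in>{i. X i \<noteq> 0 \<and> Y (k - i) \<noteq> 0}. X i ** Y (k - i))"

definition sadd :: "('a::semiring_1, 'n::finite) mser \<Rightarrow> ('a, 'n) mser \<Rightarrow> ('a, 'n) mser" where
  "sadd X Y = (\<lambda>k. X k + Y k)"

definition sbr :: "('a::comm_ring_1, 'n::finite) mser \<Rightarrow> ('a, 'n) mser \<Rightarrow> ('a, 'n) mser" where
  "sbr X Y = (\<lambda>k. smul X Y k - smul Y X k)"

definition zmono :: "'a::zero^('n::finite)^'n \<Rightarrow> int \<Rightarrow> ('a, 'n) mser" where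
  "zmono A m = (\<lambda>k. if k = m then A else 0)"

definition sone :: "('a::semiring_1, 'n::finite) mser" where
  "sone = zmono (mat 1) 0"

definition zpow :: "('a::semiring_1, 'n::finite) mser \<Rightarrow> int \<Rightarrow> ('a, 'n) mser" where
  "zpow X m = smul X (zmono (mat 1) m)"

definition pi_ge0 :: "('a::zero, 'n::finite) mser \<Rightarrow> ('a, 'n) mser" where
  "pi_ge0 X = (\<lambda>k. if k \<ge> 0 then X k else 0)"

definition pi_lt0 :: "('a::zero, 'n::finite) mser \<Rightarrow> ('a, 'n) mser" where
  "pi_lt0 X = (\<lambda>k. if k < 0 then X k else 0)"

definition inv_up :: "('a::semiring_1, 'n::finite) mser \<Rightarrow> ('a, 'n) mser" where
  "inv_up X = (SOME Y. bdd_up Y \<and> smul X Y = sone \<and> smul Y X = sone)"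

definition inv_low :: "('a::semiring_1, 'n::finite) mser \<Rightarrow> ('a, 'n) mser" where
  "inv_low X = (SOME Y. bdd_low Y \<and> smul X Y = sone \<and> smul Y X = sone)"

definition delta :: "('n::finite \<Rightarrow> int) \<Rightarrow> ('a::zero_neq_one, 'n) mser" where
  "delta l = (\<lambda>k. \<chi> i j. if i = j \<and> l i = k then 1 else 0)"

definition mapM :: "('a \<Rightarrow> 'b) \<Rightarrow> 'a^('n::finite)^'n \<Rightarrow> 'b^'n^'n" where
  "mapM f A = (\<chi> i j. f (A $ i $ j))"

definition mapS :: "('a \<Rightarrow> 'b) \<Rightarrow> ('a, 'n::finite) mser \<Rightarrow> ('b, 'n) mser" where
  "mapS f X = (\<lambda>k. mapM f (X k))"

definition G_neg :: "('a::semiring_1, 'n::finite) mser set" where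
  "G_neg = {k. k 0 = mat 1 \<and> (\<forall>i>0. k i = 0)}"

definition G_nonneg :: "('a::semiring_1, 'n::finite) mser set" where
  "G_nonneg = {k. invertible (k 0) \<and> (\<forall>i<0. k i = 0)}"

text \<open>Polynomials in z (image of pi_{>=0} on gl_n(R)[z,z^{-1})) and polynomials in z^{-1}
  without constant term (image of pi_{<0} on gl_n(R)[z^{-1},z)).\<close>
definition pos_part_ser :: "('a::zero, 'n::finite) mser \<Rightarrow> bool" where
  "pos_part_ser M \<longleftrightarrow> bdd_up M \<and> (\<forall>k<0. M k = 0)"

definition neg_part_ser :: "('a::zero, 'n::finite) mser \<Rightarrow> bool" where
  "neg_part_ser N \<longleftrightarrow> bdd_low N \<and> (\<forall>k\<ge>0. N k = 0)"

definition lincomb :: "(nat \<Rightarrow> complex) \<Rightarrow> (nat \<Rightarrow> complex^('n::finite)^'n) \<Rightarrow> nat \<Rightarrow> complex^'n^'n" where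
  "lincomb c F s = (\<chi> a b. \<Sum>i=1..s. c i * F i $ a $ b)"

definition lin_indep_fam :: "(nat \<Rightarrow> complex^('n::finite)^'n) \<Rightarrow> nat \<Rightarrow> bool" where
  "lin_indep_fam F s \<longleftrightarrow> (\<forall>c. lincomb c F s = 0 \<longrightarrow> (\<forall>i\<in>{1..s}. c i = 0))"

definition comm_sl_fam :: "(nat \<Rightarrow> complex^('n::finite)^'n) \<Rightarrow> nat \<Rightarrow> bool" where
  "comm_sl_fam F s \<longleftrightarrow> (\<forall>i\<in>{1..s}. trace (F i) = 0) \<and>
     (\<forall>i\<in>{1..s}. \<forall>j\<in>{1..s}. F i ** F j = F j ** F i)"

definition max_comm_basis :: "(nat \<Rightarrow> ((complex, 'n::{finite,linorder}) vec, 'n) vec) \<Rightarrow> nat \<Rightarrow> bool" where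
  "max_comm_basis E r \<longleftrightarrow> lin_indep_fam E r \<and> comm_sl_fam E r \<and>
     (\<forall>i\<in>{1..r}. \<forall>a b. b < a \<longrightarrow> E i $ a $ b = 0) \<and>
     (\<forall>(F :: nat \<Rightarrow> ((complex, 'n) vec, 'n) vec) s. lin_indep_fam F s \<and> comm_sl_fam F s \<longrightarrow> s \<le> r)"

definition in_Delta :: "(nat \<Rightarrow> complex^('n::finite)^'n) \<Rightarrow> nat \<Rightarrow> ('n \<Rightarrow> int) \<Rightarrow> bool" where
  "in_Delta E r l \<longleftrightarrow> (\<forall>\<alpha>\<in>{1..r}. sbr (delta l) (zmono (E \<alpha>) 0) = (\<lambda>k. 0))"

definition C_algebra_emb :: "(complex \<Rightarrow> 'r::comm_ring_1) \<Rightarrow> bool" where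
  "C_algebra_emb emb \<longleftrightarrow> emb 1 = 1 \<and> (\<forall>c d. emb (c + d) = emb c + emb d) \<and>
     (\<forall>c d. emb (c * d) = emb c * emb d)"

definition comm_C_derivations :: "(complex \<Rightarrow> 'r::comm_ring_1) \<Rightarrow> (int \<Rightarrow> nat \<Rightarrow> 'r \<Rightarrow> 'r) \<Rightarrow> nat \<Rightarrow> bool" where
  "comm_C_derivations emb D r \<longleftrightarrow>
     (\<forall>m. \<forall>\<alpha>\<in>{1..r}. (\<forall>x y. D m \<alpha> (x + y) = D m \<alpha> x + D m \<alpha> y) \<and>
        (\<forall>x y. D m \<alpha> (x * y) = x * D m \<alpha> y + y * D m \<alpha> x) \<and>
        (\<forall>c x. D m \<alpha> (emb c * x) = emb c * D m \<alpha> x)) \<and>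
     (\<forall>m m'. \<forall>\<alpha>\<in>{1..r}. \<forall>\<beta>\<in>{1..r}. \<forall>x. D m \<alpha> (D m' \<beta> x) = D m' \<beta> (D m \<alpha> x))"

text \<open>Derivation of the wave-matrix coefficient: d({g}psi_0) = {d g + g E_alpha z^m}psi_0;
  the same formula for phi_0.\<close>
definition dwave :: "(complex \<Rightarrow> 'r::comm_ring_1) \<Rightarrow> (int \<Rightarrow> nat \<Rightarrow> 'r \<Rightarrow> 'r) \<Rightarrow>
     (nat \<Rightarrow> complex^('n::finite)^'n) \<Rightarrow> int \<Rightarrow> nat \<Rightarrow> ('r, 'n) mser \<Rightarrow> ('r, 'n) mser" where
  "dwave emb D E m \<alpha> g = sadd (mapS (D m \<alpha>) g) (smul g (zmono (mapM emb (E \<alpha>)) m))"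

definition combined_hierarchy_solution :: "(int \<Rightarrow> nat \<Rightarrow> 'r::comm_ring_1 \<Rightarrow> 'r) \<Rightarrow> nat \<Rightarrow>
     (nat \<Rightarrow> ('r, 'n::finite) mser) \<Rightarrow> (nat \<Rightarrow> ('r, 'n) mser) \<Rightarrow> bool" where
  "combined_hierarchy_solution D r U W \<longleftrightarrow>
     (\<forall>m\<ge>0. \<forall>\<alpha>1\<in>{1..r}. \<forall>\<alpha>2\<in>{1..r}. \<forall>\<beta>\<in>{1..r}.
        mapS (D m \<alpha>1) (U \<alpha>2) = sbr (pi_ge0 (zpow (U \<alpha>1) m)) (U \<alpha>2) \<and>
        mapS (D m \<alpha>1) (W \<beta>) = sbr (pi_ge0 (zpow (U \<alpha>1) m)) (W \<beta>)) \<and>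
     (\<forall>m<0. \<forall>\<beta>1\<in>{1..r}. \<forall>\<beta>2\<in>{1..r}. \<forall>\<alpha>\<in>{1..r}.
        mapS (D m \<beta>1) (W \<beta>2) = sbr (pi_lt0 (zpow (W \<beta>1) (m + 1))) (W \<beta>2) \<and>
        mapS (D m \<beta>1) (U \<alpha>) = sbr (pi_lt0 (zpow (W \<beta>1) (m + 1))) (U \<alpha>))"

end

theory Submission
  imports Defs "HOL-Library.Function_Algebras"
begin

lemma mm_rdistrib: "((A::'a::semiring_1^'n^'m) + B) ** C = A ** C + B ** C"
  by (vector matrix_matrix_mult_def sum.distrib[symmetric] field_simps)

lemma mm_sum_left: "(\<Sum>i\<in>S. f i) ** (C::'a::semiring_1^'p^'n) = (\<Sum>i\<in>S. f i ** C)"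
  by (induct S rule: infinite_finite_induct) (auto simp: mm_rdistrib)

lemma mm_sum_right: "(C::'a::semiring_1^'n^'m) ** (\<Sum>i\<in>S. f i) = (\<Sum>i\<in>S. C ** f i)"
  by (induct S rule: infinite_finite_induct) (auto simp: matrix_add_ldistrib)

lemma mm_neg_left: "(- (A::'a::ring_1^'n^'m)) ** B = - (A ** B)"
  by (vector matrix_matrix_mult_def sum_negf)

lemma mm_neg_right: "(A::'a::ring_1^'n^'m) ** (- B) = - (A ** B)"
  by (vector matrix_matrix_mult_def sum_negf)

lemma mm_diff_left: "((A::'a::ring_1^'n^'m) - B) ** C = A ** C - B ** C"
  using mm_rdistrib[of A "-B" C] by (simp add: mm_neg_left)

lemma mm_diff_right: "(A::'a::ring_1^'n^'m) ** (B - C) = A ** B - A ** C"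
  using matrix_add_ldistrib[of A B "-C"] by (simp add: mm_neg_right)

definition fp :: "('a::semiring_1, 'n::finite) mser \<Rightarrow> ('a, 'n) mser \<Rightarrow> bool" where
  "fp X Y \<longleftrightarrow> (\<forall>k. finite {i. X i \<noteq> 0 \<and> Y (k - i) \<noteq> 0})"

lemma smul_via:
  assumes "finite A" "\<And>i. X i \<noteq> 0 \<Longrightarrow> Y (k - i) \<noteq> 0 \<Longrightarrow> i \<in> A"
  shows "smul X Y k = (\<Sum>i\<in>A. X i ** Y (k - i))"
  unfolding smul_def
  by (rule sum.mono_neutral_left) (use assms in auto)

lemma smul_zero_if: 
  assumes "\<And>i. X i \<noteq> 0 \<Longrightarrow> Y (k - i) \<noteq> 0 \<Longrightarrow> False"
  shows "smul X Y k = 0"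
  using smul_via[of "{}" X Y k] assms by auto

lemma smul_zmono_right: "smul X (zmono A m) = (\<lambda>k. X (k - m) ** A)"
proof
  fix k
  show "smul X (zmono A m) k = X (k - m) ** A"
    by (subst smul_via[of "{k - m}"]) (auto simp: zmono_def split: if_splits)
qed

lemma smul_zmono_left: "smul (zmono A m) X = (\<lambda>k. A ** X (k - m))"
proof
  fix k
  show "smul (zmono A m) X k = A ** X (k - m)"
    by (subst smul_via[of "{m}"]) (auto simp: zmono_def split: if_splits)
qed

lemma smul_one_right[simp]: "smul X sone = X"
  by (simp add: sone_def smul_zmono_right)
lemma smul_one_left[simp]: "smul sone X = X"
  by (simp add: sone_def smul_zmono_left)

lemma zmono_zmono: "smul (zmono A m) (zmono B m') = zmono (A ** B) (m + m')"
  unfolding smul_zmono_left by (auto simp: zmono_def fun_eq_iff)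

lemma zpow_eq: "zpow X m = (\<lambda>k. X (k - m))"
  by (simp add: zpow_def smul_zmono_right)

lemma sadd_eq: "sadd X Y = X + Y" by (simp add: sadd_def fun_eq_iff)
lemma sbr_eq: "sbr X Y = smul X Y - smul Y X" by (simp add: sbr_def fun_eq_iff)

lemma smul_add_left:
  assumes "fp X Z" "fp Y Z"
  shows "smul (X + Y) Z = smul X Z + smul Y Z"
proof
  fix k
  let ?A = "{i. X i \<noteq> 0 \<and> Z (k - i) \<noteq> 0} \<union> {i. Y i \<noteq> 0 \<and> Z (k - i) \<noteq> 0}"
  have f: "finite ?A" using assms by (auto simp: fp_def)
  have "smul (X + Y) Z k = (\<Sum>i\<in>?A. (X+Y) i ** Z (k - i))"
    by (rule smul_via[OF f]) auto
  moreover have "smul X Z k = (\<Sum>i\<in>?A. X i ** Z (k - i))"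
    by (rule smul_via[OF f]) auto
  moreover have "smul Y Z k = (\<Sum>i\<in>?A. Y i ** Z (k - i))"
    by (rule smul_via[OF f]) auto
  ultimately show "smul (X + Y) Z k = (smul X Z + smul Y Z) k"
    by (simp add: mm_rdistrib sum.distrib)
qed

lemma smul_add_right:
  assumes "fp X Y" "fp X Z"
  shows "smul X (Y + Z) = smul X Y + smul X Z"
proof
  fix k
  let ?A = "{i. X i \<noteq> 0 \<and> Y (k - i) \<noteq> 0} \<union> {i. X i \<noteq> 0 \<and> Z (k - i) \<noteq> 0}"
  have f: "finite ?A" using assms by (auto simp: fp_def)
  have "smul X (Y + Z) k = (\<Sum>i\<in>?A. X i ** (Y + Z) (k - i))"
    by (rule smul_via[OF f]) auto
  moreover have "smul X Y k = (\<Sum>i\<in>?A. X i ** Y (k - i))"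
    by (rule smul_via[OF f]) auto
  moreover have "smul X Z k = (\<Sum>i\<in>?A. X i ** Z (k - i))"
    by (rule smul_via[OF f]) auto
  ultimately show "smul X (Y + Z) k = (smul X Y + smul X Z) k"
    by (simp add: matrix_add_ldistrib sum.distrib)
qed

lemma smul_neg_left: "smul (- X) (Y::('a::comm_ring_1,'n::finite) mser) = - smul X Y"
  by (auto simp: smul_def fun_eq_iff mm_neg_left sum_negf)

lemma smul_neg_right: "smul X (- Y::('a::comm_ring_1,'n::finite) mser) = - smul X Y"
  by (auto simp: smul_def fun_eq_iff mm_neg_right sum_negf)

lemma smul_diff_left:
  assumes "fp X Z" "fp Y Z"
  shows "smul (X - Y) Z = smul X Z - smul (Y::('a::comm_ring_1,'n::finite) mser) Z"
proof -
  have "fp (-Y) Z" using assms(2) by (simp add: fp_def)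
  then show ?thesis using smul_add_left[OF assms(1), of "-Y"] by (simp add: smul_neg_left)
qed

lemma smul_diff_right:
  assumes "fp X Y" "fp X Z"
  shows "smul X (Y - Z) = smul X Y - smul (X::('a::comm_ring_1,'n::finite) mser) Z"
proof -
  have "fp X (-Z)" using assms(2) by (simp add: fp_def)
  then show ?thesis using smul_add_right[OF assms(1), of "-Z"] by (simp add: smul_neg_right)
qed

lemma assoc_box:
  fixes X Y Z :: "('a::semiring_1, 'n::finite) mser"
  assumes fS: "finite S" and fT: "finite T"
   and h1: "\<And>p. smul X Y p \<noteq> 0 \<Longrightarrow> Z (k-p) \<noteq> 0 \<Longrightarrow> p \<in> S"
   and h2: "\<And>p i. p \<in> S \<Longrightarrow> X i \<noteq> 0 \<Longrightarrow> Y (p-i) \<noteq> 0 \<Longrightarrow> i \<in> T"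
   and h3: "\<And>i. X i \<noteq> 0 \<Longrightarrow> smul Y Z (k-i) \<noteq> 0 \<Longrightarrow> i \<in> T"
   and h4: "\<And>i j. i \<in> T \<Longrightarrow> Y j \<noteq> 0 \<Longrightarrow> Z (k-i-j) \<noteq> 0 \<Longrightarrow> i + j \<in> S"
  shows "smul (smul X Y) Z k = smul X (smul Y Z) k"
proof -
  have "smul (smul X Y) Z k = (\<Sum>p\<in>S. smul X Y p ** Z (k-p))"
    by (rule smul_via[OF fS]) (use h1 in auto)
  also have "\<dots> = (\<Sum>p\<in>S. (\<Sum>i\<in>T. X i ** Y (p-i)) ** Z (k-p))"
    by (rule sum.cong[OF refl], subst smul_via[OF fT]) (use h2 in auto)
  also have "\<dots> = (\<Sum>p\<in>S. \<Sum>i\<in>T. X i ** (Y (p-i) ** Z (k-p)))"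
    by (simp add: mm_sum_left matrix_mul_assoc)
  also have "\<dots> = (\<Sum>i\<in>T. \<Sum>p\<in>S. X i ** (Y (p-i) ** Z (k-p)))"
    by (rule sum.swap)
  also have "\<dots> = (\<Sum>i\<in>T. X i ** smul Y Z (k - i))"
  proof (rule sum.cong[OF refl])
    fix i assume iT: "i \<in> T"
    have "smul Y Z (k - i) = (\<Sum>j\<in>(\<lambda>p. p - i) ` S. Y j ** Z (k - i - j))"
      by (rule smul_via) (use fS h4[OF iT] in \<open>auto simp: image_iff intro!: bexI[where x="i + _"]\<close>)
    also have "\<dots> = (\<Sum>p\<in>S. Y (p - i) ** Z (k - p))"
      by (subst sum.reindex) (auto simp: inj_on_def)
    finally show "(\<Sum>p\<in>S. X i ** (Y (p-i) ** Z (k-p))) = X i ** smul Y Z (k - i)"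
      by (simp add: mm_sum_right)
  qed
  also have "\<dots> = smul X (smul Y Z) k"
    by (rule smul_via[symmetric, OF fT]) (use h3 in auto)
  finally show ?thesis .
qed

lemma prod_bound_up:
  assumes "\<forall>i>a. X i = 0" "\<forall>j>b. Y j = 0" "p > a + b"
  shows "smul X Y p = 0"
proof (rule smul_zero_if)
  fix i assume "X i \<noteq> 0" "Y (p-i) \<noteq> 0"
  then have "i \<le> a" "p - i \<le> b" using assms(1,2) by (meson not_less)+
  then show False using assms(3) by linarith
qed

lemma prod_bound_low:
  assumes "\<forall>i<a. X i = 0" "\<forall>j<b. Y j = 0" "p < a + b"
  shows "smul X Y p = 0"
proof (rule smul_zero_if)
  fix i assume "X i \<noteq> 0" "Y (p-i) \<noteq> 0"
  then have "i \<ge> a" "p - i \<ge> b" using assms(1,2) by (meson not_less)+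
  then show False using assms(3) by linarith
qed

lemma up_fp: assumes "bdd_up X" "bdd_up Y" shows "fp X Y"
proof -
  obtain a b where a: "\<forall>i>a. X i = 0" and b: "\<forall>j>b. Y j = 0" using assms by (auto simp: bdd_up_def)
  show ?thesis unfolding fp_def
  proof
    fix k
    have "{i. X i \<noteq> 0 \<and> Y (k - i) \<noteq> 0} \<subseteq> {k-b..a}"
      using a b by (auto simp: not_less[symmetric])
    then show "finite {i. X i \<noteq> 0 \<and> Y (k - i) \<noteq> 0}" by (rule finite_subset) simp
  qed
qed

lemma low_fp: assumes "bdd_low X" "bdd_low Y" shows "fp X Y"
proof -
  obtain a b where a: "\<forall>i<a. X i = 0" and b: "\<forall>j<b. Y j = 0" using assms by (auto simp: bdd_low_def)
  show ?thesis unfolding fp_def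
  proof
    fix k
    have "{i. X i \<noteq> 0 \<and> Y (k - i) \<noteq> 0} \<subseteq> {a..k-b}"
      using a b by (auto simp: not_less[symmetric])
    then show "finite {i. X i \<noteq> 0 \<and> Y (k - i) \<noteq> 0}" by (rule finite_subset) simp
  qed
qed

lemma up_smul: assumes "bdd_up X" "bdd_up Y" shows "bdd_up (smul X Y)"
  using assms prod_bound_up unfolding bdd_up_def by blast

lemma low_smul: assumes "bdd_low X" "bdd_low Y" shows "bdd_low (smul X Y)"
  using assms prod_bound_low unfolding bdd_low_def by blast

lemma up_assoc:
  assumes "bdd_up X" "bdd_up Y" "bdd_up Z"
  shows "smul (smul X Y) Z = smul X (smul Y Z)"
proof
  fix k
  obtain a b c where a: "\<forall>i>a. X i = 0" and b: "\<forall>j>b. Y j = 0" and c: "\<forall>j>c. Z j = 0"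
    using assms by (auto simp: bdd_up_def)
  have XY: "\<And>p. p > a + b \<Longrightarrow> smul X Y p = 0" using prod_bound_up[OF a b] by blast
  have YZ: "\<And>p. p > b + c \<Longrightarrow> smul Y Z p = 0" using prod_bound_up[OF b c] by blast
  show "smul (smul X Y) Z k = smul X (smul Y Z) k"
  proof (rule assoc_box[where S="{k-c..a+b}" and T="{k-b-c..a}"])
    fix p assume "smul X Y p \<noteq> 0" "Z (k-p) \<noteq> 0"
    then show "p \<in> {k-c..a+b}" using XY c by (auto simp: not_less[symmetric])
  next
    fix p i assume "p \<in> {k-c..a+b}" "X i \<noteq> 0" "Y (p-i) \<noteq> 0"
    then show "i \<in> {k-b-c..a}" using a b by (auto simp: not_less[symmetric])
  next
    fix i assume "X i \<noteq> 0" "smul Y Z (k-i) \<noteq> 0"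
    then show "i \<in> {k-b-c..a}" using a YZ by (auto simp: not_less[symmetric])
  next
    fix i j assume "i \<in> {k-b-c..a}" "Y j \<noteq> 0" "Z (k-i-j) \<noteq> 0"
    then show "i + j \<in> {k-c..a+b}" using b c by (auto simp: not_less[symmetric])
  qed auto
qed

lemma low_assoc:
  assumes "bdd_low X" "bdd_low Y" "bdd_low Z"
  shows "smul (smul X Y) Z = smul X (smul Y Z)"
proof
  fix k
  obtain a b c where a: "\<forall>i<a. X i = 0" and b: "\<forall>j<b. Y j = 0" and c: "\<forall>j<c. Z j = 0"
    using assms by (auto simp: bdd_low_def)
  have XY: "\<And>p. p < a + b \<Longrightarrow> smul X Y p = 0" using prod_bound_low[OF a b] by blast
  have YZ: "\<And>p. p < b + c \<Longrightarrow> smul Y Z p = 0" using prod_bound_low[OF b c] by blast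
  show "smul (smul X Y) Z k = smul X (smul Y Z) k"
  proof (rule assoc_box[where S="{a+b..k-c}" and T="{a..k-b-c}"])
    fix p assume "smul X Y p \<noteq> 0" "Z (k-p) \<noteq> 0"
    then show "p \<in> {a+b..k-c}" using XY c by (auto simp: not_less[symmetric])
  next
    fix p i assume "p \<in> {a+b..k-c}" "X i \<noteq> 0" "Y (p-i) \<noteq> 0"
    then show "i \<in> {a..k-b-c}" using a b by (auto simp: not_less[symmetric])
  next
    fix i assume "X i \<noteq> 0" "smul Y Z (k-i) \<noteq> 0"
    then show "i \<in> {a..k-b-c}" using a YZ by (auto simp: not_less[symmetric])
  next
    fix i j assume "i \<in> {a..k-b-c}" "Y j \<noteq> 0" "Z (k-i-j) \<noteq> 0"
    then show "i + j \<in> {a+b..k-c}" using b c by (auto simp: not_less[symmetric])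
  qed auto
qed

lemma up_add: fixes X :: "('a::comm_ring_1,'n::finite) mser" assumes "bdd_up X" "bdd_up Y" shows "bdd_up (X + Y)"
proof -
  obtain a b where "\<forall>k>a. X k = 0" "\<forall>k>b. Y k = 0" using assms by (auto simp: bdd_up_def)
  then show ?thesis unfolding bdd_up_def by (intro exI[where x="max a b"]) auto
qed
lemma low_add: fixes X :: "('a::comm_ring_1,'n::finite) mser" assumes "bdd_low X" "bdd_low Y" shows "bdd_low (X + Y)"
proof -
  obtain a b where "\<forall>k<a. X k = 0" "\<forall>k<b. Y k = 0" using assms by (auto simp: bdd_low_def)
  then show ?thesis unfolding bdd_low_def by (intro exI[where x="min a b"]) auto
qed
lemma up_neg: "bdd_up (X::('a::comm_ring_1,'n::finite) mser) \<Longrightarrow> bdd_up (- X)"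
  unfolding bdd_up_def by auto
lemma low_neg: "bdd_low (X::('a::comm_ring_1,'n::finite) mser) \<Longrightarrow> bdd_low (- X)"
  unfolding bdd_low_def by auto
lemma up_diff: "bdd_up X \<Longrightarrow> bdd_up (Y::('a::comm_ring_1,'n::finite) mser) \<Longrightarrow> bdd_up (X - Y)"
  using up_add[of X "-Y"] up_neg[of Y] by simp
lemma low_diff: "bdd_low X \<Longrightarrow> bdd_low (Y::('a::comm_ring_1,'n::finite) mser) \<Longrightarrow> bdd_low (X - Y)"
  using low_add[of X "-Y"] low_neg[of Y] by simp
lemma up_zmono: "bdd_up (zmono A m)" unfolding bdd_up_def zmono_def by auto
lemma low_zmono: "bdd_low (zmono A m)" unfolding bdd_low_def zmono_def by auto
lemma up_sone: "bdd_up sone" by (simp add: sone_def up_zmono)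
lemma low_sone: "bdd_low sone" by (simp add: sone_def low_zmono)
lemma up_delta: "bdd_up (delta l)"
  unfolding bdd_up_def delta_def
  by (rule exI[where x="Max (range l)"]) (auto simp: vec_eq_iff)
lemma low_delta: "bdd_low (delta l)"
  unfolding bdd_low_def delta_def
  by (rule exI[where x="Min (range l)"]) (auto simp: vec_eq_iff)
lemma up_zpow: "bdd_up X \<Longrightarrow> bdd_up (zpow X m)"
  by (simp add: zpow_def up_smul up_zmono)
lemma low_zpow: "bdd_low X \<Longrightarrow> bdd_low (zpow X m)"
  by (simp add: zpow_def low_smul low_zmono)

lemma mapM_zero: "f 0 = 0 \<Longrightarrow> mapM f 0 = 0"
  by (simp add: mapM_def vec_eq_iff)
lemma up_mapS: "f 0 = 0 \<Longrightarrow> bdd_up X \<Longrightarrow> bdd_up (mapS f X)"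
  unfolding bdd_up_def mapS_def by (metis mapM_zero)
lemma low_mapS: "f 0 = 0 \<Longrightarrow> bdd_low X \<Longrightarrow> bdd_low (mapS f X)"
  unfolding bdd_low_def mapS_def by (metis mapM_zero)

definition isder :: "('a::comm_ring_1 \<Rightarrow> 'a) \<Rightarrow> bool" where
  "isder f \<longleftrightarrow> (\<forall>x y. f (x + y) = f x + f y) \<and> (\<forall>x y. f (x * y) = x * f y + y * f x)"

lemma isder_0: "isder f \<Longrightarrow> f 0 = 0"
  unfolding isder_def by (metis add_cancel_right_right add_0)
lemma isder_1: "isder f \<Longrightarrow> f 1 = 0"
  unfolding isder_def by (metis add_cancel_right_right mult_1 mult_1_right)
lemma isder_sum: "isder f \<Longrightarrow> f (sum g A) = (\<Sum>a\<in>A. f (g a))"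
  by (induct A rule: infinite_finite_induct) (auto simp: isder_0, auto simp: isder_def)
lemma isder_neg: "isder f \<Longrightarrow> f (- x) = - f x"
  unfolding isder_def by (metis add.right_inverse add_eq_0_iff isder_0 isder_def)

lemma mapM_add: "(\<forall>x y. f (x + y) = f x + f y) \<Longrightarrow> mapM f (A + B) = mapM f A + mapM f B"
  by (simp add: mapM_def vec_eq_iff)

lemma mapM_der_mult:
  assumes "isder f"
  shows "mapM f (A ** B) = mapM f A ** B + A ** mapM f B"
  using assms
  by (simp add: mapM_def vec_eq_iff matrix_matrix_mult_def isder_sum sum.distrib[symmetric])
     (simp add: isder_def add.commute mult.commute)

lemma mapM_der_sum:
  assumes "isder f"
  shows "mapM f (sum g A) = (\<Sum>a\<in>A. mapM f (g a))"
  using assms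
  by (induct A rule: infinite_finite_induct) (auto simp: mapM_zero isder_0 mapM_add isder_def)

lemma mapS_add: "isder f \<Longrightarrow> mapS f (X + Y) = mapS f X + mapS f Y"
  by (simp add: mapS_def fun_eq_iff mapM_add isder_def)
lemma mapS_neg: "isder f \<Longrightarrow> mapS f (- X) = - mapS f X"
  by (simp add: mapS_def fun_eq_iff mapM_def vec_eq_iff isder_neg)
lemma mapS_diff: "isder f \<Longrightarrow> mapS f (X - Y) = mapS f X - mapS f Y"
  using mapS_add[of f X "-Y"] mapS_neg[of f Y] by simp

lemma leibniz:
  assumes f: "isder f" and "fp X Y"
  shows "mapS f (smul X Y) = smul (mapS f X) Y + smul X (mapS f Y)"
proof
  fix k
  let ?A = "{i. X i \<noteq> 0 \<and> Y (k - i) \<noteq> 0}"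
  have fin: "finite ?A" using assms by (auto simp: fp_def)
  have z: "\<And>A. mapM f A \<noteq> 0 \<Longrightarrow> A \<noteq> 0" using mapM_zero isder_0[OF f] by metis
  have "mapS f (smul X Y) k = mapM f (\<Sum>i\<in>?A. X i ** Y (k - i))"
    by (simp add: mapS_def smul_def)
  also have "\<dots> = (\<Sum>i\<in>?A. mapM f (X i) ** Y (k - i) + X i ** mapM f (Y (k - i)))"
    by (simp add: mapM_der_sum[OF f] mapM_der_mult[OF f])
  also have "\<dots> = smul (mapS f X) Y k + smul X (mapS f Y) k"
    by (simp add: sum.distrib, (subst smul_via[OF fin], auto simp: mapS_def dest: z)+)
  finally show "mapS f (smul X Y) k = (smul (mapS f X) Y + smul X (mapS f Y)) k" by simp
qed

lemma emb_0: "C_algebra_emb g \<Longrightarrow> g 0 = 0"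
  unfolding C_algebra_emb_def by (metis add_cancel_right_right add_0)
lemma emb_sum: "C_algebra_emb g \<Longrightarrow> g (sum h A) = (\<Sum>a\<in>A. g (h a))"
  by (induct A rule: infinite_finite_induct) (auto simp: emb_0, auto simp: C_algebra_emb_def)

lemma mapM_emb_mult:
  assumes "C_algebra_emb g"
  shows "mapM g (A ** B) = mapM g A ** mapM g B"
  using assms
  by (simp add: mapM_def vec_eq_iff matrix_matrix_mult_def emb_sum) (simp add: C_algebra_emb_def)

lemma der_const:
  assumes "isder f" "C_algebra_emb g" "\<forall>c x. f (g c * x) = g c * f x"
  shows "f (g c) = 0"
  using assms(3)[rule_format, of c 1] isder_1[OF assms(1)] by simp

lemma mapS_zmono: "mapS f (zmono A m) = zmono (mapM f A) m" if "f 0 = 0"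
  using that by (auto simp: mapS_def zmono_def fun_eq_iff mapM_zero)

lemma mapS_const_zero:
  assumes "isder f" "C_algebra_emb g" "\<forall>c x. f (g c * x) = g c * f x"
  shows "mapS f (zmono (mapM g A) m) = 0"
  using der_const[OF assms] isder_0[OF assms(1)]
  by (auto simp: mapS_def zmono_def fun_eq_iff mapM_def vec_eq_iff)

lemma mapS_delta_zero:
  assumes "isder f"
  shows "mapS f (delta l) = 0"
  using isder_0[OF assms] isder_1[OF assms]
  by (auto simp: mapS_def delta_def fun_eq_iff mapM_def vec_eq_iff)

function rinv :: "(int \<Rightarrow> 'a::comm_ring_1^'n::finite^'n) \<Rightarrow> 'a^'n^'n \<Rightarrow> nat \<Rightarrow> 'a^'n^'n" where
  "rinv K a n = (if n = 0 then a else - (a ** (\<Sum>i\<in>{1..n}. K (int i) ** rinv K a (n - i))))"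
  by auto
termination by (relation "Wellfounded.measure (\<lambda>(K,a,n). n)") auto

function linv :: "(int \<Rightarrow> 'a::comm_ring_1^'n::finite^'n) \<Rightarrow> 'a^'n^'n \<Rightarrow> nat \<Rightarrow> 'a^'n^'n" where
  "linv K a n = (if n = 0 then a else - ((\<Sum>i\<in>{1..n}. linv K a (n - i) ** K (int i)) ** a))"
  by auto
termination by (relation "Wellfounded.measure (\<lambda>(K,a,n). n)") auto

declare rinv.simps[simp del] linv.simps[simp del]

lemma sum_split0: "(\<Sum>i\<in>{0..n::nat}. f i) = f 0 + (\<Sum>i\<in>{1..n}. f i)"
  by (simp add: sum.atLeast_Suc_atMost)

lemma rinv_prop:
  assumes "K 0 ** a = mat 1"
  shows "(\<Sum>i\<in>{0..n}. K (int i) ** rinv K a (n - i)) = (if n = 0 then mat 1 else 0)"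
proof (cases "n = 0")
  case True then show ?thesis using assms by (simp add: rinv.simps)
next
  case False
  let ?S = "\<Sum>i\<in>{1..n}. K (int i) ** rinv K a (n - i)"
  have "K 0 ** rinv K a n = - ?S"
    using False by (subst rinv.simps) (simp add: mm_neg_right matrix_mul_assoc assms)
  then show ?thesis using False by (simp add: sum_split0)
qed

lemma linv_prop:
  assumes "a ** K 0 = mat 1"
  shows "(\<Sum>i\<in>{0..n}. linv K a (n - i) ** K (int i)) = (if n = 0 then mat 1 else 0)"
proof (cases "n = 0")
  case True then show ?thesis using assms by (simp add: linv.simps)
next
  case False
  let ?S = "\<Sum>i\<in>{1..n}. linv K a (n - i) ** K (int i)"
  have "linv K a n ** K 0 = - ?S"
    using False by (subst linv.simps) (simp add: mm_neg_left matrix_mul_assoc[symmetric] assms)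
  then show ?thesis using False by (simp add: sum_split0)
qed

definition ser_of :: "(nat \<Rightarrow> 'a::comm_ring_1^'n::finite^'n) \<Rightarrow> ('a,'n) mser" where
  "ser_of y = (\<lambda>j. if j \<ge> 0 then y (nat j) else 0)"

lemma sone_apply: "sone p = (if p = 0 then mat 1 else 0)"
  by (simp add: sone_def zmono_def)

lemma smul_nonneg_series:
  fixes K Y :: "('a::comm_ring_1,'n::finite) mser"
  assumes K: "\<forall>i<0. K i = 0" and Y: "\<forall>i<0. Y i = 0"
    and H: "\<And>n. (\<Sum>i\<in>{0..n}. K (int i) ** Y (int n - int i)) = (if n = 0 then mat 1 else 0)"
  shows "smul K Y = sone"
proof
  fix p
  show "smul K Y p = sone p"
  proof (cases "p < 0")
    case True then show ?thesis using prod_bound_low[OF K Y, of p] by (simp add: sone_apply)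
  next
    case False
    define n where "n = nat p"
    have p: "p = int n" using False n_def by simp
    have "smul K Y p = (\<Sum>i\<in>{0..p}. K i ** Y (p - i))"
    proof (rule smul_via)
      fix i assume "K i \<noteq> 0" "Y (p - i) \<noteq> 0"
      then show "i \<in> {0..p}" using K Y by (auto simp: not_less[symmetric])
    qed simp
    also have "{0..p} = int ` {0..n}" using p by (simp add: image_int_atLeastAtMost)
    also have "(\<Sum>i\<in>int ` {0..n}. K i ** Y (p - i)) = (\<Sum>i\<in>{0..n}. K (int i) ** Y (int n - int i))"
      by (subst sum.reindex) (auto simp: p)
    finally show ?thesis using H[of n] p by (simp add: sone_apply)
  qed
qed

lemma smul_nonneg_series':
  fixes K Y :: "('a::comm_ring_1,'n::finite) mser"
  assumes K: "\<forall>i<0. K i = 0" and Y: "\<forall>i<0. Y i = 0"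
    and H: "\<And>n. (\<Sum>i\<in>{0..n}. Y (int n - int i) ** K (int i)) = (if n = 0 then mat 1 else 0)"
  shows "smul Y K = sone"
proof
  fix p
  show "smul Y K p = sone p"
  proof (cases "p < 0")
    case True then show ?thesis using prod_bound_low[OF Y K, of p] by (simp add: sone_apply)
  next
    case False
    define n where "n = nat p"
    have p: "p = int n" using False n_def by simp
    have "smul Y K p = (\<Sum>i\<in>(\<lambda>i. p - i) ` {0..p}. Y i ** K (p - i))"
    proof (rule smul_via)
      fix i assume "Y i \<noteq> 0" "K (p - i) \<noteq> 0"
      then show "i \<in> (\<lambda>i. p - i) ` {0..p}" using K Y
        by (auto simp: not_less[symmetric] image_iff intro!: bexI[where x="p - i"])
    qed simp
    also have "\<dots> = (\<Sum>i\<in>{0..p}. Y (p - i) ** K i)"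
      by (subst sum.reindex) (auto simp: inj_on_def)
    also have "{0..p} = int ` {0..n}" using p by (simp add: image_int_atLeastAtMost)
    also have "(\<Sum>i\<in>int ` {0..n}. Y (p - i) ** K i) = (\<Sum>i\<in>{0..n}. Y (int n - int i) ** K (int i))"
      by (subst sum.reindex) (auto simp: p)
    finally show ?thesis using H[of n] p by (simp add: sone_apply)
  qed
qed

lemma nonneg_inverse:
  fixes K :: "('a::comm_ring_1,'n::finite) mser"
  assumes K: "\<forall>i<0. K i = 0" and inv: "invertible (K 0)"
  shows "\<exists>Y. (\<forall>i<0. Y i = 0) \<and> smul K Y = sone \<and> smul Y K = sone"
proof -
  obtain a where a1: "K 0 ** a = mat 1" and a2: "a ** K 0 = mat 1" using inv by (auto simp: invertible_def)
  define Y where "Y = ser_of (rinv K a)"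
  define Z where "Z = ser_of (linv K a)"
  have Y0: "\<forall>i<0. Y i = 0" and Z0: "\<forall>i<0. Z i = 0" by (auto simp: Y_def Z_def ser_of_def)
  have "smul K Y = sone"
  proof (rule smul_nonneg_series[OF K Y0])
    fix n :: nat
    have "(\<Sum>i\<in>{0..n}. K (int i) ** Y (int n - int i)) = (\<Sum>i\<in>{0..n}. K (int i) ** rinv K a (n - i))"
      by (rule sum.cong) (auto simp: Y_def ser_of_def nat_diff_distrib)
    then show "(\<Sum>i\<in>{0..n}. K (int i) ** Y (int n - int i)) = (if n = 0 then mat 1 else 0)"
      using rinv_prop[of K a, OF a1] by simp
  qed
  moreover have "smul Z K = sone"
  proof (rule smul_nonneg_series'[OF K Z0])
    fix n :: nat
    have "(\<Sum>i\<in>{0..n}. Z (int n - int i) ** K (int i)) = (\<Sum>i\<in>{0..n}. linv K a (n - i) ** K (int i))"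
      by (rule sum.cong) (auto simp: Z_def ser_of_def nat_diff_distrib)
    then show "(\<Sum>i\<in>{0..n}. Z (int n - int i) ** K (int i)) = (if n = 0 then mat 1 else 0)"
      using linv_prop[of a K, OF a2] by simp
  qed
  moreover have "bdd_low K" "bdd_low Y" "bdd_low Z" using K Y0 Z0 by (auto simp: bdd_low_def)
  ultimately have "Z = Y" using low_assoc[of Z K Y] by simp
  then show ?thesis using Y0 \<open>smul K Y = sone\<close> \<open>smul Z K = sone\<close> by auto
qed

definition rf :: "('a, 'n::finite) mser \<Rightarrow> ('a, 'n) mser" where "rf X = (\<lambda>k. X (- k))"

lemma rf_smul: "smul (rf X) (rf Y) = rf (smul X Y)"
proof
  fix k
  have g: "\<And>P. {i::int. P (- i)} = uminus ` {j. P j}"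
    by (auto simp: image_iff) (metis minus_minus)
  have "{i. X (- i) \<noteq> 0 \<and> Y (- (k - i)) \<noteq> 0} = {i. X (- i) \<noteq> 0 \<and> Y (- k - (- i)) \<noteq> 0}"
    by simp
  also have "\<dots> = uminus ` {j. X j \<noteq> 0 \<and> Y (- k - j) \<noteq> 0}" by (rule g)
  finally have "{i. X (- i) \<noteq> 0 \<and> Y (- (k - i)) \<noteq> 0} = uminus ` {j. X j \<noteq> 0 \<and> Y (- k - j) \<noteq> 0}" .
  then show "smul (rf X) (rf Y) k = rf (smul X Y) k"
    unfolding smul_def rf_def by (simp add: sum.reindex) (rule sum.cong, simp_all, metis diff_diff_eq2 diff_minus_eq_add minus_diff_eq uminus_add_conv_diff add.commute)
qed

lemma rf_rf[simp]: "rf (rf X) = X" by (simp add: rf_def)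
lemma rf_sone[simp]: "rf sone = sone" by (auto simp: rf_def sone_def zmono_def)

lemma neg_inverse:
  fixes K :: "('a::comm_ring_1,'n::finite) mser"
  assumes K: "K \<in> G_neg"
  shows "\<exists>Y. (\<forall>i>0. Y i = 0) \<and> smul K Y = sone \<and> smul Y K = sone"
proof -
  have "\<forall>i<0. rf K i = 0" "invertible (rf K 0)" using K
    by (auto simp: G_neg_def rf_def invertible_def intro!: exI[where x="mat 1"])
  then obtain Y where Y: "\<forall>i<0. Y i = 0" "smul (rf K) Y = sone" "smul Y (rf K) = sone"
    using nonneg_inverse[of "rf K"] by blast
  have "smul K (rf Y) = sone" using rf_smul[of K "rf Y"] Y(2) by (metis rf_rf rf_sone)
  moreover have "smul (rf Y) K = sone" using rf_smul[of "rf Y" K] Y(3) by (metis rf_rf rf_sone)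
  moreover have "\<forall>i>0. rf Y i = 0" using Y(1) by (simp add: rf_def)
  ultimately show ?thesis by blast
qed

lemma inv_up_k1:
  fixes K :: "('a::comm_ring_1,'n::finite) mser"
  assumes K: "K \<in> G_neg"
  shows "(\<forall>i>0. inv_up K i = 0) \<and> bdd_up (inv_up K) \<and> smul K (inv_up K) = sone \<and> smul (inv_up K) K = sone"
proof -
  obtain Y where Y: "\<forall>i>0. Y i = 0" "smul K Y = sone" "smul Y K = sone" using neg_inverse[OF K] by blast
  have bY: "bdd_up Y" using Y(1) by (auto simp: bdd_up_def)
  have bK: "bdd_up K" using K by (auto simp: bdd_up_def G_neg_def)
  have "bdd_up (inv_up K) \<and> smul K (inv_up K) = sone \<and> smul (inv_up K) K = sone"
    unfolding inv_up_def by (rule someI[of _ Y]) (use Y bY in auto)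
  moreover then have "inv_up K = Y" using up_assoc[of "inv_up K" K Y] bY bK Y by simp
  ultimately show ?thesis using Y by auto
qed

lemma inv_low_k2:
  fixes K :: "('a::comm_ring_1,'n::finite) mser"
  assumes K: "K \<in> G_nonneg"
  shows "(\<forall>i<0. inv_low K i = 0) \<and> bdd_low (inv_low K) \<and> smul K (inv_low K) = sone \<and> smul (inv_low K) K = sone"
proof -
  have "\<exists>Y. (\<forall>i<0. Y i = 0) \<and> smul K Y = sone \<and> smul Y K = sone"
    using nonneg_inverse[of K] K by (auto simp: G_nonneg_def)
  then obtain Y where Y: "\<forall>i<0. Y i = 0" "smul K Y = sone" "smul Y K = sone" by blast
  have bY: "bdd_low Y" using Y(1) by (auto simp: bdd_low_def)
  have bK: "bdd_low K" using K by (auto simp: bdd_low_def G_nonneg_def)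
  have "bdd_low (inv_low K) \<and> smul K (inv_low K) = sone \<and> smul (inv_low K) K = sone"
    unfolding inv_low_def by (rule someI[of _ Y]) (use Y bY in auto)
  moreover then have "inv_low K = Y" using low_assoc[of "inv_low K" K Y] bY bK Y by simp
  ultimately show ?thesis using Y by auto
qed

definition rg :: "(('a::comm_ring_1,'n::finite) mser \<Rightarrow> bool) \<Rightarrow> bool" where
  "rg P \<longleftrightarrow> P = bdd_up \<or> P = bdd_low"

lemma rg_fp: "rg P \<Longrightarrow> P X \<Longrightarrow> P Y \<Longrightarrow> fp X Y"
  unfolding rg_def using up_fp low_fp by blast
lemma rg_smul: "rg P \<Longrightarrow> P X \<Longrightarrow> P Y \<Longrightarrow> P (smul X Y)"
  unfolding rg_def using up_smul low_smul by blast
lemma rg_assoc: "rg P \<Longrightarrow> P X \<Longrightarrow> P Y \<Longrightarrow> P Z \<Longrightarrow> smul (smul X Y) Z = smul X (smul Y Z)"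
  unfolding rg_def using up_assoc low_assoc by blast
lemma rg_add: "rg P \<Longrightarrow> P X \<Longrightarrow> P Y \<Longrightarrow> P (X + Y)"
  unfolding rg_def using up_add low_add by blast
lemma rg_diff: "rg P \<Longrightarrow> P X \<Longrightarrow> P Y \<Longrightarrow> P (X - Y)"
  unfolding rg_def using up_diff low_diff by blast
lemma rg_neg: "rg P \<Longrightarrow> P X \<Longrightarrow> P (- X)"
  unfolding rg_def using up_neg low_neg by blast
lemma rg_zmono: "rg P \<Longrightarrow> P (zmono A m)"
  unfolding rg_def using up_zmono low_zmono by blast
lemma rg_sone: "rg P \<Longrightarrow> P sone"
  unfolding rg_def using up_sone low_sone by blast
lemma rg_delta: "rg P \<Longrightarrow> P (delta l)"
  unfolding rg_def using up_delta low_delta by blast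
lemma rg_zpow: "rg P \<Longrightarrow> P X \<Longrightarrow> P (zpow X m)"
  unfolding rg_def using up_zpow low_zpow by blast
lemma rg_mapS: "rg P \<Longrightarrow> f 0 = 0 \<Longrightarrow> P X \<Longrightarrow> P (mapS f X)"
  unfolding rg_def using up_mapS low_mapS by blast

lemma smul_zero_right[simp]: "smul X 0 = 0" by (simp add: smul_def fun_eq_iff)
lemma smul_zero_left[simp]: "smul 0 X = 0" by (simp add: smul_def fun_eq_iff)

lemma sum_if_conj: fixes j :: "'b::finite" shows "(\<Sum>k\<in>UNIV. if k = j \<and> P k then c else 0) = (if P j then c else (0::'a::comm_monoid_add))"
proof -
  have "(\<Sum>k\<in>UNIV. if k = j \<and> P k then c else 0) = (\<Sum>k\<in>UNIV. if k = j then (if P j then c else 0) else 0)"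
    by (rule sum.cong) auto
  then show ?thesis by simp
qed

lemma sum_if_conj': fixes j :: "'b::finite" shows "(\<Sum>k\<in>UNIV. if j = k \<and> P k then c else 0) = (if P j then c else (0::'a::comm_monoid_add))"
proof -
  have "(\<Sum>k\<in>UNIV. if j = k \<and> P k then c else 0) = (\<Sum>k\<in>UNIV. if j = k then (if P j then c else 0) else 0)"
    by (rule sum.cong) auto
  then show ?thesis by simp
qed

lemma delta_left_entry: "(delta l q ** A) $ i $ j = (if l i = q then A $ i $ j else 0)"
  by (simp add: matrix_matrix_mult_def delta_def if_distrib if_distribR sum.delta cong: if_cong)

lemma delta_right_entry: "(A ** delta l q) $ i $ j = (if l j = q then A $ i $ j else 0)"
  by (simp add: matrix_matrix_mult_def delta_def if_distrib if_distribR sum.delta' sum_if_conj sum_if_conj' cong: if_cong)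

lemma smul_delta_entry: fixes V :: "('a::comm_ring_1,'n::finite) mser" shows "smul V (delta l) p $ i $ j = V (p - l j) $ i $ j"
proof -
  let ?S = "(\<lambda>j. p - l j) ` UNIV"
  have "smul V (delta l) p = (\<Sum>q\<in>?S. V q ** delta l (p - q))"
  proof (rule smul_via)
    fix q assume "V q \<noteq> 0" "delta l (p - q) \<noteq> 0"
    show "q \<in> ?S"
    proof (rule ccontr)
      assume "q \<notin> ?S"
      have "\<forall>b. l b \<noteq> p - q"
      proof
        fix b show "l b \<noteq> p - q"
        proof
          assume "l b = p - q" then have "q = p - l b" by simp
          then show False using \<open>q \<notin> ?S\<close> by auto
        qed
      qed
      then show False using \<open>delta l (p - q) \<noteq> 0\<close> by (simp add: delta_def vec_eq_iff)
    qed
  qed simp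
  also have "\<dots> $ i $ j = (\<Sum>q\<in>?S. (V q ** delta l (p - q)) $ i $ j)"
    by (simp only: sum_component)
  also have "\<dots> = (\<Sum>q\<in>?S. if q = p - l j then V q $ i $ j else 0)"
    by (rule sum.cong[OF refl]) (auto simp: delta_right_entry)
  also have "\<dots> = V (p - l j) $ i $ j"
    by (simp only: sum.delta finite_imageI finite) simp
  finally show ?thesis .
qed

lemma delta_cancel:
  fixes V :: "('a::comm_ring_1,'n::finite) mser"
  assumes "smul V (delta l) = smul W (delta l)"
  shows "V = W"
proof -
  have "\<forall>q i j. V q $ i $ j = W q $ i $ j"
  proof (intro allI)
    fix q i j
    have "smul V (delta l) (q + l j) $ i $ j = smul W (delta l) (q + l j) $ i $ j" using assms by simp
    then show "V q $ i $ j = W q $ i $ j" by (simp add: smul_delta_entry)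
  qed
  then show ?thesis by (simp add: fun_eq_iff vec_eq_iff)
qed

lemma delta_comm_iff:
  "(\<forall>q. delta l q ** A = A ** delta l q) \<longleftrightarrow> (\<forall>i j. A $ i $ j \<noteq> 0 \<longrightarrow> l i = l j)"
proof
  assume H: "\<forall>q. delta l q ** A = A ** delta l q"
  show "\<forall>i j. A $ i $ j \<noteq> 0 \<longrightarrow> l i = l j"
  proof (intro allI impI)
    fix i j assume "A $ i $ j \<noteq> 0"
    moreover have "(delta l (l i) ** A) $ i $ j = (A ** delta l (l i)) $ i $ j" using H by simp
    ultimately show "l i = l j" by (simp add: delta_left_entry delta_right_entry split: if_splits)
  qed
next
  assume H: "\<forall>i j. A $ i $ j \<noteq> 0 \<longrightarrow> l i = l j"
  show "\<forall>q. delta l q ** A = A ** delta l q"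
  proof (intro allI)
    fix q show "delta l q ** A = A ** delta l q"
    proof -
      have "(delta l q ** A) $ i $ j = (A ** delta l q) $ i $ j" for i j
        using H[rule_format, of i j] by (cases "A $ i $ j = 0") (auto simp: delta_left_entry delta_right_entry)
      then show ?thesis by (simp add: vec_eq_iff)
    qed
  qed
qed

lemma zs_central: "smul (zmono (mat 1) s) Y = smul Y (zmono (mat 1) s)"
  by (simp add: smul_zmono_left smul_zmono_right)

lemma zmono_shift: "zmono A m = smul (zmono A c0) (zmono (mat 1) (m - c0))"
  by (simp add: zmono_zmono)

lemma mapS_sone: "isder f \<Longrightarrow> mapS f sone = 0"
  by (simp add: sone_def mapS_zmono isder_0 mapM_def isder_1 mat_def vec_eq_iff fun_eq_iff zmono_def)
     (simp add: isder_0 isder_1 mapS_def mapM_def zmono_def vec_eq_iff mat_def)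

context
  fixes P :: "('a::comm_ring_1,'n::finite) mser \<Rightarrow> bool"
  assumes rg: "rg P"
begin

lemma P_smul[simp]: "P X \<Longrightarrow> P Y \<Longrightarrow> P (smul X Y)" using rg_smul[OF rg] .
lemma P_add[simp]: "P X \<Longrightarrow> P Y \<Longrightarrow> P (X + Y)" using rg_add[OF rg] .
lemma P_diff[simp]: "P X \<Longrightarrow> P Y \<Longrightarrow> P (X - Y)" using rg_diff[OF rg] .
lemma P_neg[simp]: "P X \<Longrightarrow> P (- X)" using rg_neg[OF rg] .
lemma P_zmono[simp]: "P (zmono A m)" using rg_zmono[OF rg] .
lemma P_sone[simp]: "P sone" using rg_sone[OF rg] .
lemma P_delta[simp]: "P (delta l)" using rg_delta[OF rg] .
lemma P_zpow[simp]: "P X \<Longrightarrow> P (zpow X m)" using rg_zpow[OF rg] .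
lemma P_fp: "P X \<Longrightarrow> P Y \<Longrightarrow> fp X Y" using rg_fp[OF rg] .
lemma P_assoc: "P X \<Longrightarrow> P Y \<Longrightarrow> P Z \<Longrightarrow> smul (smul X Y) Z = smul X (smul Y Z)"
  using rg_assoc[OF rg] .
lemma P_mapS[simp]: "isder f \<Longrightarrow> P X \<Longrightarrow> P (mapS f X)" using rg_mapS[OF rg] isder_0 by blast

lemma P_cancel: "P A \<Longrightarrow> P B \<Longrightarrow> P Y \<Longrightarrow> smul A B = sone \<Longrightarrow> smul A (smul B Y) = Y"
  using P_assoc[of A B Y] by simp

lemma step1:
  fixes k X :: "('a,'n) mser"
  assumes Pk: "P k" and PX: "P X" and f: "isder f"
    and comm: "\<forall>q. delta l q ** E0 = E0 ** delta l q"
    and eq: "sadd (mapS f (smul k (delta l))) (smul (smul k (delta l)) (zmono E0 m))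
             = smul X (smul k (delta l))"
  shows "mapS f k + smul k (zmono E0 m) = smul X k"
proof -
  let ?d = "delta l :: ('a,'n) mser" and ?E = "zmono E0 m"
  have 1: "mapS f (smul k ?d) = smul (mapS f k) ?d"
    using leibniz[OF f P_fp[OF Pk P_delta]] by (simp add: mapS_delta_zero[OF f])
  have cz: "smul ?d ?E = smul ?E ?d"
    using comm by (simp add: smul_zmono_left smul_zmono_right)
  have 2: "smul (smul k ?d) ?E = smul (smul k ?E) ?d"
    using Pk by (simp add: P_assoc cz)
  have 3: "smul X (smul k ?d) = smul (smul X k) ?d"
    using Pk PX by (simp add: P_assoc)
  have "smul (mapS f k + smul k ?E) ?d = smul (mapS f k) ?d + smul (smul k ?E) ?d"
    by (rule smul_add_left) (use Pk f in \<open>auto intro!: P_fp\<close>)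
  also have "\<dots> = smul (smul X k) ?d" using eq 1 2 3 by (simp add: sadd_eq)
  finally show ?thesis by (rule delta_cancel)
qed

lemma step2:
  fixes k ki X F Ez :: "('a,'n) mser"
  assumes Pk: "P k" and Pki: "P ki" and PX: "P X" and PF: "P F" and PE: "P Ez"
    and inv: "smul k ki = sone"
    and eq: "F + smul k Ez = smul X k"
  shows "X = smul F ki + smul (smul k Ez) ki"
proof -
  have "smul (F + smul k Ez) ki = smul F ki + smul (smul k Ez) ki"
    by (rule smul_add_left) (use assms in \<open>auto intro!: P_fp\<close>)
  moreover have "smul (smul X k) ki = X" using assms by (simp add: P_assoc)
  ultimately show ?thesis using eq by simp
qed

lemma conj_shift:
  fixes k ki c :: "('a,'n) mser"
  assumes Pk: "P k" and Pki: "P ki" and Pc: "P c"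
  shows "smul (smul k (smul c (zmono (mat 1) s))) ki = smul (smul (smul k c) ki) (zmono (mat 1) s)"
  using assms by (simp add: P_assoc zs_central[of s ki])

lemma step3:
  fixes k ki c :: "('a,'n) mser"
  assumes Pk: "P k" and Pki: "P ki" and Pc: "P c" and f: "isder f"
    and inv1: "smul k ki = sone" and inv2: "smul ki k = sone"
    and fc: "mapS f c = 0"
  shows "mapS f (smul (smul k c) ki) =
           smul (smul (mapS f k) ki) (smul (smul k c) ki) - smul (smul (smul k c) ki) (smul (mapS f k) ki)"
proof -
  let ?A = "smul (mapS f k) ki" and ?V = "smul (smul k c) ki"
  have PFk: "P (mapS f k)" and PFi: "P (mapS f ki)" using assms by auto
  have h1: "smul (mapS f k) ki + smul k (mapS f ki) = 0"
    using leibniz[OF f P_fp[OF Pk Pki]] inv1 by (simp add: mapS_sone[OF f])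
  have h2: "mapS f ki = - smul ki ?A"
  proof -
    have "mapS f ki = smul (smul ki k) (mapS f ki)" using inv2 by simp
    also have "\<dots> = smul ki (smul k (mapS f ki))" by (rule P_assoc[OF Pki Pk PFi])
    also have "smul k (mapS f ki) = - ?A" using h1 by (simp add: eq_neg_iff_add_eq_0 add.commute)
    finally show ?thesis by (simp only: smul_neg_right)
  qed
  have h3: "mapS f (smul k c) = smul (mapS f k) c"
    using leibniz[OF f P_fp[OF Pk Pc]] fc by simp
  have "mapS f ?V = smul (mapS f (smul k c)) ki + smul (smul k c) (mapS f ki)"
    using leibniz[OF f P_fp[OF _ Pki], of "smul k c"] Pk Pc by simp
  also have "smul (mapS f (smul k c)) ki = smul ?A ?V"
  proof -
    have "smul ?A ?V = smul (mapS f k) (smul c ki)"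
      using assms PFk by (simp add: P_assoc P_cancel)
    also have "\<dots> = smul (smul (mapS f k) c) ki" using assms PFk by (simp add: P_assoc)
    finally show ?thesis using h3 by simp
  qed
  also have "smul (smul k c) (mapS f ki) = - smul ?V ?A"
    using assms PFk by (simp add: h2 smul_neg_right P_assoc)
  finally show ?thesis by (simp only: diff_conv_add_uminus)
qed

lemma conj_comm:
  fixes k ki :: "('a,'n) mser"
  assumes Pk: "P k" and Pki: "P ki" and inv2: "smul ki k = sone"
    and C: "C1 ** C2 = C2 ** C1"
  shows "smul (zpow (smul (smul k (zmono C1 c1)) ki) s) (smul (smul k (zmono C2 c2)) ki)
       = smul (smul (smul k (zmono C2 c2)) ki) (zpow (smul (smul k (zmono C1 c1)) ki) s)"
proof -
  have cc: "smul (zmono C1 c1) (zmono C2 c2) = smul (zmono C2 c2) (zmono C1 c1)"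
    by (simp add: zmono_zmono C add.commute)
  have cc': "smul (zmono C1 c1) (smul (zmono C2 c2) Y) = smul (zmono C2 c2) (smul (zmono C1 c1) Y)"
    if "P Y" for Y
    using that cc P_assoc[of "zmono C1 c1" "zmono C2 c2" Y] P_assoc[of "zmono C2 c2" "zmono C1 c1" Y]
    by simp
  have zs: "smul (zmono (mat 1) s) Y = smul Y (zmono (mat 1) s)" for Y by (rule zs_central)
  have inv2': "smul ki (smul k Y) = Y" if "P Y" for Y
    using that assms P_assoc[of ki k Y] by simp
  show ?thesis unfolding zpow_def
    using assms by (simp add: P_assoc inv2' zs cc')
qed

end

lemma ab_diff_cancel: "(a - b) - (c - b) = a - (c::'x::ab_group_add)" by simp

context
  fixes P :: "('a::comm_ring_1,'n::finite) mser \<Rightarrow> bool"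
  assumes rg: "rg P"
begin

lemma G1:
  fixes k ki X :: "('a,'n) mser"
  assumes Pk: "P k" and Pki: "P ki" and PX: "P X" and f: "isder f"
    and inv1: "smul k ki = sone"
    and comm: "\<forall>q. delta l q ** E0 = E0 ** delta l q"
    and eq: "sadd (mapS f (smul k (delta l))) (smul (smul k (delta l)) (zmono E0 m))
             = smul X (smul k (delta l))"
  shows "X = smul (mapS f k) ki + zpow (smul (smul k (zmono E0 cz)) ki) (m - cz)"
proof -
  have s1: "mapS f k + smul k (zmono E0 m) = smul X k"
    by (rule step1[OF rg Pk PX f comm eq])
  have s2: "X = smul (mapS f k) ki + smul (smul k (zmono E0 m)) ki"
    by (rule step2[OF rg Pk Pki PX _ _ inv1 s1]) (use rg f Pk in auto)
  have "smul (smul k (zmono E0 m)) ki = zpow (smul (smul k (zmono E0 cz)) ki) (m - cz)"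
    unfolding zpow_def
    by (subst zmono_shift[of E0 m cz], rule conj_shift[OF rg Pk Pki]) (use rg in simp)
  then show ?thesis using s2 by simp
qed

lemma hier:
  fixes k ki X :: "('a,'n) mser"
  assumes Pk: "P k" and Pki: "P ki" and PX: "P X" and f: "isder f"
    and inv1: "smul k ki = sone" and inv2: "smul ki k = sone"
    and fc: "mapS f (zmono C2 c2) = 0"
    and C: "C1 ** C2 = C2 ** C1"
    and X: "X = smul (mapS f k) ki + zpow (smul (smul k (zmono C1 c1)) ki) s"
  shows "mapS f (smul (smul k (zmono C2 c2)) ki) = sbr X (smul (smul k (zmono C2 c2)) ki)"
proof -
  let ?A = "smul (mapS f k) ki" and ?V = "smul (smul k (zmono C2 c2)) ki"
    and ?Z = "zpow (smul (smul k (zmono C1 c1)) ki) s"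
  have PA: "P ?A" and PV: "P ?V" and PZ: "P ?Z" using rg Pk Pki f by auto
  have A: "?A = X - ?Z" using X by simp
  have "mapS f ?V = smul ?A ?V - smul ?V ?A"
    by (rule step3[OF rg Pk Pki _ f inv1 inv2 fc]) (use rg in simp)
  also have "\<dots> = (smul X ?V - smul ?Z ?V) - (smul ?V X - smul ?V ?Z)"
    unfolding A
    by (subst smul_diff_left, (use rg PX PZ PV in \<open>auto intro: P_fp\<close>)[2],
        subst smul_diff_right, (use rg PX PZ PV in \<open>auto intro: P_fp\<close>)[2]) (rule refl)
  also have "smul ?Z ?V = smul ?V ?Z"
    by (rule conj_comm[OF rg Pk Pki inv2 C])
  finally show ?thesis by (simp only: sbr_eq ab_diff_cancel)
qed

end

lemma mapM_mat1_der: "isder f \<Longrightarrow> mapM f (mat 1) = 0"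
  by (simp add: mapM_def mat_def vec_eq_iff isder_0 isder_1 if_distrib cong: if_cong)

lemma rg_up: "rg bdd_up" by (simp add: rg_def)
lemma rg_low: "rg bdd_low" by (simp add: rg_def)

theorem proposition4p1:
  fixes emb :: "complex \<Rightarrow> 'r::comm_ring_1"
    and D :: "int \<Rightarrow> nat \<Rightarrow> 'r \<Rightarrow> 'r"
    and r :: nat
    and E :: "nat \<Rightarrow> ((complex, 'n::{finite,linorder}) vec, 'n) vec"
    and l :: "'n \<Rightarrow> int"
    and k1 k2 :: "('r, 'n) mser"
    and M N :: "int \<Rightarrow> nat \<Rightarrow> ('r, 'n) mser"
  assumes emb: "C_algebra_emb emb"
    and der: "comm_C_derivations emb D r"
    and t: "max_comm_basis E r"
    and delta: "in_Delta E r l"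
    and k1: "k1 \<in> G_neg"
    and k2: "k2 \<in> G_nonneg"
    and M: "\<And>m \<alpha>. m \<ge> 0 \<Longrightarrow> \<alpha> \<in> {1..r} \<Longrightarrow>
              pos_part_ser (M m \<alpha>)
            \<and> dwave emb D E m \<alpha> (smul k1 (delta l)) = smul (M m \<alpha>) (smul k1 (delta l))
            \<and> dwave emb D E m \<alpha> (smul k2 (delta l)) = smul (M m \<alpha>) (smul k2 (delta l))"
    and N: "\<And>m \<beta>. m < 0 \<Longrightarrow> \<beta> \<in> {1..r} \<Longrightarrow>
              neg_part_ser (N m \<beta>)
            \<and> dwave emb D E m \<beta> (smul k1 (delta l)) = smul (N m \<beta>) (smul k1 (delta l))
            \<and> dwave emb D E m \<beta> (smul k2 (delta l)) = smul (N m \<beta>) (smul k2 (delta l))"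
  defines "U \<equiv> (\<lambda>\<alpha>. smul (smul k1 (zmono (mapM emb (E \<alpha>)) 0)) (inv_up k1))"
    and "W \<equiv> (\<lambda>\<beta>. smul (smul k2 (zmono (mapM emb (E \<beta>)) (-1))) (inv_low k2))"
  shows "(\<forall>m\<ge>0. \<forall>\<alpha>\<in>{1..r}. M m \<alpha> = pi_ge0 (zpow (U \<alpha>) m))
       \<and> (\<forall>m<0. \<forall>\<beta>\<in>{1..r}. N m \<beta> = pi_lt0 (zpow (W \<beta>) (m + 1)))
       \<and> combined_hierarchy_solution D r U W"
proof -
  have isd: "isder (D m \<alpha>)" if "\<alpha> \<in> {1..r}" for m \<alpha>
    using der that by (simp add: comm_C_derivations_def isder_def)
  have fc: "mapS (D m \<alpha>) (zmono (mapM emb C) c0) = 0" if "\<alpha> \<in> {1..r}" for m \<alpha> C c0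
  proof -
    have "\<forall>c x. D m \<alpha> (emb c * x) = emb c * D m \<alpha> x"
      using der that unfolding comm_C_derivations_def by blast
    then show ?thesis by (rule mapS_const_zero[OF isd[OF that] emb])
  qed
  have Ecomm: "mapM emb (E a) ** mapM emb (E b) = mapM emb (E b) ** mapM emb (E a)"
    if "a \<in> {1..r}" "b \<in> {1..r}" for a b
  proof -
    have "E a ** E b = E b ** E a" using t that by (simp add: max_comm_basis_def comm_sl_fam_def)
    then show ?thesis by (simp add: mapM_emb_mult[OF emb, symmetric])
  qed
  have dcomm: "\<forall>q. delta l q ** mapM emb (E \<alpha>) = mapM emb (E \<alpha>) ** delta l q"
    if "\<alpha> \<in> {1..r}" for \<alpha>
  proof -
    have "sbr (delta l) (zmono (E \<alpha>) 0) = (\<lambda>k. 0)" using delta that by (simp add: in_Delta_def)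
    then have "(\<lambda>k. delta l k ** E \<alpha>) = (\<lambda>k. E \<alpha> ** delta l k)"
      by (simp add: sbr_def smul_zmono_left smul_zmono_right fun_eq_iff)
    then have "\<forall>q. delta l q ** E \<alpha> = E \<alpha> ** delta l q" by (simp add: fun_eq_iff)
    then have "\<forall>i j. E \<alpha> $ i $ j \<noteq> 0 \<longrightarrow> l i = l j" by (simp only: delta_comm_iff)
    then have "\<forall>i j. mapM emb (E \<alpha>) $ i $ j \<noteq> 0 \<longrightarrow> l i = l j"
    proof (intro allI impI)
      fix i j assume "mapM emb (E \<alpha>) $ i $ j \<noteq> 0"
      then have "E \<alpha> $ i $ j \<noteq> 0" using emb_0[OF emb] by (auto simp: mapM_def)
      then show "l i = l j" using \<open>\<forall>i j. E \<alpha> $ i $ j \<noteq> 0 \<longrightarrow> l i = l j\<close> by blast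
    qed
    then show ?thesis by (simp only: delta_comm_iff)
  qed
  define k1i where "k1i = inv_up k1"
  define k2i where "k2i = inv_low k2"
  have k1i: "(\<forall>i>0. k1i i = 0) \<and> bdd_up k1i \<and> smul k1 k1i = sone \<and> smul k1i k1 = sone"
    unfolding k1i_def by (rule inv_up_k1[OF k1])
  have k2i: "(\<forall>i<0. k2i i = 0) \<and> bdd_low k2i \<and> smul k2 k2i = sone \<and> smul k2i k2 = sone"
    unfolding k2i_def by (rule inv_low_k2[OF k2])
  have k1i_b: "bdd_up k1i" and k1i_1: "smul k1 k1i = sone" and k1i_2: "smul k1i k1 = sone"
    using k1i by auto
  have k2i_b: "bdd_low k2i" and k2i_1: "smul k2 k2i = sone" and k2i_2: "smul k2i k2 = sone"
    using k2i by auto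
  have bk1: "bdd_up k1" using k1 by (auto simp: bdd_up_def G_neg_def)
  have bk2: "bdd_low k2" using k2 by (auto simp: bdd_low_def G_nonneg_def)
  have Ueq: "U \<alpha> = smul (smul k1 (zmono (mapM emb (E \<alpha>)) 0)) k1i" for \<alpha>
    by (simp add: U_def k1i_def)
  have Weq: "W \<alpha> = smul (smul k2 (zmono (mapM emb (E \<alpha>)) (-1))) k2i" for \<alpha>
    by (simp add: W_def k2i_def)
  define A1 where "A1 m \<alpha> = smul (mapS (D m \<alpha>) k1) k1i" for m \<alpha>
  define A2 where "A2 m \<alpha> = smul (mapS (D m \<alpha>) k2) k2i" for m \<alpha>
  have A1z: "A1 m \<alpha> p = 0" if "\<alpha> \<in> {1..r}" "p \<ge> 0" for m \<alpha> p
    unfolding A1_def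
  proof (rule smul_zero_if)
    fix i assume a: "mapS (D m \<alpha>) k1 i \<noteq> 0" "k1i (p - i) \<noteq> 0"
    have "i < 0"
    proof (rule ccontr)
      assume "\<not> i < 0"
      then have "k1 i = 0 \<or> k1 i = mat 1" using k1 by (cases "i = 0") (auto simp: G_neg_def)
      then show False using a(1) mapM_mat1_der[OF isd[of \<alpha> m, OF that(1)]] mapM_zero[of "D m \<alpha>", OF isder_0[OF isd[of \<alpha> m, OF that(1)]]]
        by (auto simp: mapS_def)
    qed
    moreover have "p - i \<le> 0" using a(2) k1i by (meson not_less)
    ultimately show False using that(2) by linarith
  qed
  have A2z: "A2 m \<alpha> p = 0" if "\<alpha> \<in> {1..r}" "p < 0" for m \<alpha> p
    unfolding A2_def
  proof (rule smul_zero_if)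
    fix i assume a: "mapS (D m \<alpha>) k2 i \<noteq> 0" "k2i (p - i) \<noteq> 0"
    have "i \<ge> 0"
    proof (rule ccontr)
      assume "\<not> i \<ge> 0"
      then have "k2 i = 0" using k2 by (auto simp: G_nonneg_def)
      then show False using a(1) mapM_zero[of "D m \<alpha>", OF isder_0[OF isd[of \<alpha> m, OF that(1)]]]
        by (auto simp: mapS_def)
    qed
    moreover have "p - i \<ge> 0" using a(2) k2i by (meson not_less)
    ultimately show False using that(2) by linarith
  qed
  have bM: "bdd_up (M m \<alpha>) \<and> bdd_low (M m \<alpha>)" if "m \<ge> 0" "\<alpha> \<in> {1..r}" for m \<alpha>
    using M[OF that] by (auto simp: pos_part_ser_def bdd_low_def)
  have bN: "bdd_up (N m \<alpha>) \<and> bdd_low (N m \<alpha>)" if "m < 0" "\<alpha> \<in> {1..r}" for m \<alpha>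
    using N[OF that] by (auto simp: neg_part_ser_def bdd_up_def intro!: exI[where x=0])
  have dw: "dwave emb D E m \<alpha> g = sadd (mapS (D m \<alpha>) g) (smul g (zmono (mapM emb (E \<alpha>)) m))"
    for m \<alpha> g by (simp add: dwave_def)
  have eqX1: "X = A1 m \<alpha> + zpow (U \<alpha>) m"
    if "\<alpha> \<in> {1..r}" "bdd_up X" "dwave emb D E m \<alpha> (smul k1 (delta l)) = smul X (smul k1 (delta l))"
    for X m \<alpha>
    using G1[OF rg_up bk1 _ that(2) isd[OF that(1)] _ dcomm[OF that(1)], where ki=k1i and m=m and cz=0] that(3) k1i
    by (simp add: dw A1_def Ueq)
  have eqX2: "X = A2 m \<alpha> + zpow (W \<alpha>) (m + 1)"
    if "\<alpha> \<in> {1..r}" "bdd_low X" "dwave emb D E m \<alpha> (smul k2 (delta l)) = smul X (smul k2 (delta l))"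
    for X m \<alpha>
    using G1[OF rg_low bk2 _ that(2) isd[OF that(1)] _ dcomm[OF that(1)], where ki=k2i and m=m and cz="-1"] that(3) k2i
    by (simp add: dw A2_def Weq)
  have P1: "M m \<alpha> = pi_ge0 (zpow (U \<alpha>) m)" if "m \<ge> 0" "\<alpha> \<in> {1..r}" for m \<alpha>
  proof
    fix p
    have e: "M m \<alpha> = A1 m \<alpha> + zpow (U \<alpha>) m" using eqX1[OF that(2)] M[OF that] bM[OF that] by blast
    show "M m \<alpha> p = pi_ge0 (zpow (U \<alpha>) m) p"
    proof (cases "p \<ge> 0")
      case True then show ?thesis using e A1z[OF that(2) True] by (simp add: pi_ge0_def)
    next
      case False then show ?thesis using M[OF that] by (simp add: pi_ge0_def pos_part_ser_def)
    qed
  qed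
  have P2: "N m \<beta> = pi_lt0 (zpow (W \<beta>) (m + 1))" if "m < 0" "\<beta> \<in> {1..r}" for m \<beta>
  proof
    fix p
    have e: "N m \<beta> = A2 m \<beta> + zpow (W \<beta>) (m + 1)" using eqX2[OF that(2)] N[OF that] bN[OF that] by blast
    show "N m \<beta> p = pi_lt0 (zpow (W \<beta>) (m + 1)) p"
    proof (cases "p < 0")
      case True then show ?thesis using e A2z[OF that(2) True] by (simp add: pi_lt0_def)
    next
      case False then show ?thesis using N[OF that] by (simp add: pi_lt0_def neg_part_ser_def)
    qed
  qed
  have H: "combined_hierarchy_solution D r U W"
    unfolding combined_hierarchy_solution_def
  proof (intro conjI allI impI ballI)
    fix m :: int and a1 a2 b assume m: "m \<ge> 0" and a: "a1 \<in> {1..r}" "a2 \<in> {1..r}" "b \<in> {1..r}"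
    have e1: "M m a1 = A1 m a1 + zpow (U a1) m" using eqX1[OF a(1)] M[OF m a(1)] bM[OF m a(1)] by blast
    have e2: "M m a1 = A2 m a1 + zpow (W a1) (m + 1)" using eqX2[OF a(1)] M[OF m a(1)] bM[OF m a(1)] by blast
    have "mapS (D m a1) (U a2) = sbr (M m a1) (U a2)"
      unfolding Ueq
      by (rule hier[OF rg_up bk1 k1i_b conjunct1[OF bM[OF m a(1)]] isd[OF a(1)] k1i_1 k1i_2 fc[OF a(1)] Ecomm[OF a(1) a(2)]])
         (use e1 in \<open>simp only: A1_def Ueq\<close>)
    then show "mapS (D m a1) (U a2) = sbr (pi_ge0 (zpow (U a1) m)) (U a2)" using P1[OF m a(1)] by simp
    have "mapS (D m a1) (W b) = sbr (M m a1) (W b)"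
      unfolding Weq
      by (rule hier[OF rg_low bk2 k2i_b conjunct2[OF bM[OF m a(1)]] isd[OF a(1)] k2i_1 k2i_2 fc[OF a(1)] Ecomm[OF a(1) a(3)]])
         (use e2 in \<open>simp only: A2_def Weq\<close>)
    then show "mapS (D m a1) (W b) = sbr (pi_ge0 (zpow (U a1) m)) (W b)" using P1[OF m a(1)] by simp
  next
    fix m :: int and b1 b2 a assume m: "m < 0" and a: "b1 \<in> {1..r}" "b2 \<in> {1..r}" "a \<in> {1..r}"
    have e1: "N m b1 = A1 m b1 + zpow (U b1) m" using eqX1[OF a(1)] N[OF m a(1)] bN[OF m a(1)] by blast
    have e2: "N m b1 = A2 m b1 + zpow (W b1) (m + 1)" using eqX2[OF a(1)] N[OF m a(1)] bN[OF m a(1)] by blast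
    have "mapS (D m b1) (W b2) = sbr (N m b1) (W b2)"
      unfolding Weq
      by (rule hier[OF rg_low bk2 k2i_b conjunct2[OF bN[OF m a(1)]] isd[OF a(1)] k2i_1 k2i_2 fc[OF a(1)] Ecomm[OF a(1) a(2)]])
         (use e2 in \<open>simp only: A2_def Weq\<close>)
    then show "mapS (D m b1) (W b2) = sbr (pi_lt0 (zpow (W b1) (m + 1))) (W b2)" using P2[OF m a(1)] by simp
    have "mapS (D m b1) (U a) = sbr (N m b1) (U a)"
      unfolding Ueq
      by (rule hier[OF rg_up bk1 k1i_b conjunct1[OF bN[OF m a(1)]] isd[OF a(1)] k1i_1 k1i_2 fc[OF a(1)] Ecomm[OF a(1) a(3)]])
         (use e1 in \<open>simp only: A1_def Ueq\<close>)
    then show "mapS (D m b1) (U a) = sbr (pi_lt0 (zpow (W b1) (m + 1))) (U a)" using P2[OF m a(1)] by simp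
  qed
  show ?thesis using P1 P2 H by blast
qed

end
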